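(* Let $y_0\in E$ and let $u$ be a positive solution of $0=\tfrac12b^2u''+\tilde au'+\eta u-u^2-d\frac{(u')^2}{u}$ on $[y_0,\infty)$ with $u(y)/\eta(y)\to1$ as $y\to\infty$. Assume that on $[y_0,\infty)$: $\eta\in C^2$, $\eta>0$, $\Psi\eta\le1$, $\tilde a\le0$, and $\bar a:=\frac{\tilde a}{\eta}+(b^2-2d)\frac{\eta'}{\eta^2}\le-C$ for some constant $C>0$; that $\Psi\eta$ is strictly increasing on $[y_0,\infty)$; and that $\eta(y)\to\infty$, $\Psi\eta(y)\to1$ and $\eta'(y)/\eta(y)\to0$ as $y\to\infty$. Then $u'(y)/u(y)\to0$ as $y\to\infty$.
   Context: $E=(E_-,\infty)$ with $E_-\in\{-\infty\}\cup\mathbb R$. $r,\lambda,\sigma,a,b,\rho,\delta:E\to\mathbb R$ are locally Lipschitz with $\sigma>0$, $b(y)\neq0$, $\rho(y)\in[-1,1]$; $R\in(0,\infty)\setminus\{1\}$. Define $\eta=\frac1R\big(\delta-(1-R)(r+\frac{\lambda^2}{2R})\big)$, $\tilde a=a+\frac{1-R}{R}\rho\lambda b$, $d=\frac12b^2((1-\rho^2)R+\rho^2+1)$, and for positive $g\in C^2$, $\Psi g=1+\frac{\frac12b^2g''+\tilde ag'}{g^2}-d\frac{(g')^2}{g^3}$. *)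

theory Defs
  imports "HOL-Analysis.Analysis"
begin

text \<open>The state space E = (E_-, infinity), with E_- in {-infinity} union R, encoded by an extended real.\<close>
definition Espace :: "ereal \<Rightarrow> real set" where
  "Espace Em = {y. Em < ereal y}"

definition loc_lipschitz_on :: "real set \<Rightarrow> (real \<Rightarrow> real) \<Rightarrow> bool" where
  "loc_lipschitz_on S f \<longleftrightarrow>
     (\<forall>x\<in>S. \<exists>e>0. \<exists>L. \<forall>y\<in>ball x e \<inter> S. \<forall>z\<in>ball x e \<inter> S. \<bar>f y - f z\<bar> \<le> L * \<bar>y - z\<bar>)"

definition eta_fun :: "real \<Rightarrow> (real \<Rightarrow> real) \<Rightarrow> (real \<Rightarrow> real) \<Rightarrow> (real \<Rightarrow> real) \<Rightarrow> real \<Rightarrow> real" where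
  "eta_fun R r lam delta y = (1 / R) * (delta y - (1 - R) * (r y + (lam y)\<^sup>2 / (2 * R)))"

definition atilde_fun :: "real \<Rightarrow> (real \<Rightarrow> real) \<Rightarrow> (real \<Rightarrow> real) \<Rightarrow> (real \<Rightarrow> real) \<Rightarrow> (real \<Rightarrow> real) \<Rightarrow> real \<Rightarrow> real" where
  "atilde_fun R a rho lam b y = a y + (1 - R) / R * rho y * lam y * b y"

definition d_fun :: "real \<Rightarrow> (real \<Rightarrow> real) \<Rightarrow> (real \<Rightarrow> real) \<Rightarrow> real \<Rightarrow> real" where
  "d_fun R b rho y = 1/2 * (b y)\<^sup>2 * ((1 - (rho y)\<^sup>2) * R + (rho y)\<^sup>2 + 1)"

text \<open>Psi g, with g' and g'' supplied as the (first and second) derivatives of g.\<close>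
definition Psi_fun :: "(real \<Rightarrow> real) \<Rightarrow> (real \<Rightarrow> real) \<Rightarrow> (real \<Rightarrow> real) \<Rightarrow> (real \<Rightarrow> real)
    \<Rightarrow> (real \<Rightarrow> real) \<Rightarrow> (real \<Rightarrow> real) \<Rightarrow> real \<Rightarrow> real" where
  "Psi_fun b ta d g g1 g2 y =
     1 + (1/2 * (b y)\<^sup>2 * g2 y + ta y * g1 y) / (g y)\<^sup>2 - d y * (g1 y)\<^sup>2 / (g y) ^ 3"

end

theory Submission
  imports Defs
begin

lemma barrier:
  fixes f f' :: "real \<Rightarrow> real"
  assumes ab: "a \<le> b"
    and der: "\<And>x. a \<le> x \<Longrightarrow> x \<le> b \<Longrightarrow> (f has_real_derivative f' x) (at x)"
    and fa: "f a \<ge> 0"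
    and zero: "\<And>x. a \<le> x \<Longrightarrow> x \<le> b \<Longrightarrow> f x = 0 \<Longrightarrow> f' x > 0"
  shows "\<And>x. a \<le> x \<Longrightarrow> x \<le> b \<Longrightarrow> f x \<ge> 0"
proof (rule ccontr)
  fix x2 assume x2: "a \<le> x2" "x2 \<le> b" and neg: "\<not> f x2 \<ge> 0"
  have cont: "continuous_on {a..x2} f"
    using der x2 by (intro continuous_at_imp_continuous_on) (metis DERIV_isCont atLeastAtMost_iff order_trans)
  define Z where "Z = {a..x2} \<inter> f -` {0}"
  have "closed Z" unfolding Z_def by (rule continuous_closed_preimage[OF cont]) auto
  hence "compact ({a..x2} \<inter> Z)" by (rule compact_Int_closed[OF compact_Icc])
  moreover have "{a..x2} \<inter> Z = Z" unfolding Z_def by auto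
  ultimately have cZ: "compact Z" by simp
  obtain z where "a \<le> z" "z \<le> x2" "f z = 0" using IVT2'[of f x2 0 a] neg fa x2 cont by auto
  hence "Z \<noteq> {}" unfolding Z_def by auto
  then obtain s where sZ: "s \<in> Z" and smax: "\<forall>t\<in>Z. t \<le> s" using compact_attains_sup[OF cZ] by blast
  have s: "a \<le> s" "s \<le> x2" "f s = 0" using sZ unfolding Z_def by auto
  have "s \<noteq> x2" using s neg by auto
  with s have sx: "s < x2" by auto
  have "f' s > 0" using zero s x2 by auto
  then obtain d where d: "d > 0" "\<forall>h>0. h < d \<longrightarrow> f s < f (s + h)"
    using DERIV_pos_inc_right[OF der[of s]] s x2 by auto
  define h where "h = min (d/2) (x2 - s)"
  have h: "h > 0" "h < d" "s + h \<le> x2" using d sx unfolding h_def by auto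
  have fp: "f (s + h) > 0" using d h s by auto
  have cont2: "continuous_on {s+h..x2} f" using s h by (intro continuous_on_subset[OF cont]) auto
  obtain t where t: "s + h \<le> t" "t \<le> x2" "f t = 0"
    using IVT2'[of f x2 0 "s+h"] neg fp h cont2 by auto
  hence "t \<in> Z" unfolding Z_def using s h by auto
  with smax t h show False by fastforce
qed


lemma up_ineq:
  fixes K A e u v w C eps :: real
  assumes "K \<ge> 0" "e > 0" "C > 0" "eps > 0" "v \<ge> eps" "\<bar>w\<bar> \<le> eps/4"
    "u/e - 1 > -(C*eps/4)" "A/e - 2*K*w/e \<le> -C"
  shows "K* v\<^sup>2 - A* v + u - e > 0"
proof -
  have A: "A \<le> 2*K*w - C*e" using assms(2,8) by (simp add: field_simps)
  have u: "u - e > -(C*eps/4)*e" using assms(2,7) by (simp add: field_simps)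
  have "A* v \<le> (2*K*w - C*e)* v" using A assms(4,5) by (intro mult_right_mono) auto
  moreover have "K* v *(v - 2*w) \<ge> 0" using assms by (intro mult_nonneg_nonneg) auto
  moreover have "C*e* v \<ge> C*e*eps" using assms by (intro mult_left_mono) auto
  moreover have "C*e*eps > (C*eps/4)*e" using assms by (simp add: field_simps)
  ultimately show ?thesis using u by (simp add: power2_eq_square algebra_simps)
qed


lemma low_ineq:
  fixes K A e u v w C eps :: real
  assumes "K \<ge> 0" "e > 0" "C > 0" "eps > 0" "v \<le> -eps/2" "\<bar>w\<bar> \<le> eps/4"
    "u/e - 1 < C*eps/4" "A/e - 2*K*w/e \<le> -C"
  shows "K* v\<^sup>2 - A* v + u - e < 2*K* v\<^sup>2"
proof -
  have A: "A \<le> 2*K*w - C*e" using assms(2,8) by (simp add: field_simps)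
  have u: "u - e < (C*eps/4)*e" using assms(2,7) by (simp add: field_simps)
  have "-A* v \<le> -(2*K*w - C*e)* v" using A assms(4,5) by (intro mult_right_mono_neg) auto
  moreover have "C*e* v \<le> C*e*(-eps/2)" using assms by (intro mult_left_mono) auto
  moreover have "-2*K*w* v \<le> K* v\<^sup>2"
  proof -
    have "\<bar>w\<bar> \<le> \<bar>v\<bar>/2" using assms by auto
    hence "2*\<bar>w\<bar>*\<bar>v\<bar> \<le> \<bar>v\<bar>*\<bar>v\<bar>" by (intro mult_right_mono) auto
    moreover have "-(2*w * v) \<le> \<bar>2*w * v\<bar>" by (rule abs_ge_minus_self)
    moreover have "\<bar>2*w * v\<bar> = 2*\<bar>w\<bar>*\<bar>v\<bar>" by (simp add: abs_mult)
    moreover have "\<bar>v\<bar>*\<bar>v\<bar> = v * v" by (rule abs_mult_self_eq)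
    ultimately have "-2*w * v \<le> v * v" by linarith
    thus ?thesis using assms(1) mult_left_mono[of "-2*w* v" "v * v" K] by (simp add: power2_eq_square algebra_simps)
  qed
  moreover have "C*e*(-eps/2) + (C*eps/4)*e < 0" using assms by (simp add: field_simps)
  ultimately show ?thesis using u by (simp add: power2_eq_square algebra_simps)
qed


lemma riccati:
  fixes B D A e u u1 u2 :: real
  assumes "B \<noteq> 0" "u > 0" "0 = 1/2*B\<^sup>2*u2 + A*u1 + e*u - u\<^sup>2 - D*u1\<^sup>2/u"
  shows "(u2 * u - u1 * u1) / u ^ Suc (Suc 0) = 2/B\<^sup>2 * ((D - B\<^sup>2/2)*(u1/u)\<^sup>2 - A*(u1/u) + u - e)"
proof -
  have h: "u2 = 2/B\<^sup>2 * (-A*u1 - e*u + u\<^sup>2 + D*u1\<^sup>2/u)" using assms by (simp add: field_simps)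
  show ?thesis unfolding h using assms(1,2) by (simp add: field_simps power2_eq_square)
qed

theorem theorem4p15:
  fixes Em :: ereal
    and r lam sigma a b rho delta :: "real \<Rightarrow> real"
    and R y0 C :: real
    and u u1 u2 eta1 eta2 :: "real \<Rightarrow> real"
  defines "E \<equiv> Espace Em"
    and "eta \<equiv> eta_fun R r lam delta"
    and "ta \<equiv> atilde_fun R a rho lam b"
    and "d \<equiv> d_fun R b rho"
  assumes Em: "Em \<noteq> \<infinity>"
    and lip: "loc_lipschitz_on E r" "loc_lipschitz_on E lam" "loc_lipschitz_on E sigma"
             "loc_lipschitz_on E a" "loc_lipschitz_on E b" "loc_lipschitz_on E rho"
             "loc_lipschitz_on E delta"
    and sigma_pos: "\<forall>y\<in>E. sigma y > 0"
    and b_nz: "\<forall>y\<in>E. b y \<noteq> 0"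
    and rho_bd: "\<forall>y\<in>E. -1 \<le> rho y \<and> rho y \<le> 1"
    and R: "R > 0" "R \<noteq> 1"
    and y0: "y0 \<in> E"
    \<comment> \<open>u is a positive C^2 solution of the ODE on [y0, infinity)\<close>
    and u_d1: "\<forall>y\<ge>y0. (u has_real_derivative u1 y) (at y within {y0..})"
    and u_d2: "\<forall>y\<ge>y0. (u1 has_real_derivative u2 y) (at y within {y0..})"
    and u2_cont: "continuous_on {y0..} u2"
    and u_pos: "\<forall>y\<ge>y0. u y > 0"
    and u_ode: "\<forall>y\<ge>y0. 0 = 1/2 * (b y)\<^sup>2 * u2 y + ta y * u1 y + eta y * u y - (u y)\<^sup>2
                         - d y * (u1 y)\<^sup>2 / u y"
    and u_lim: "((\<lambda>y. u y / eta y) \<longlongrightarrow> 1) at_top"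
    \<comment> \<open>eta is C^2 on [y0, infinity)\<close>
    and eta_d1: "\<forall>y\<ge>y0. (eta has_real_derivative eta1 y) (at y within {y0..})"
    and eta_d2: "\<forall>y\<ge>y0. (eta1 has_real_derivative eta2 y) (at y within {y0..})"
    and eta2_cont: "continuous_on {y0..} eta2"
    and eta_pos: "\<forall>y\<ge>y0. eta y > 0"
    and Psi_le: "\<forall>y\<ge>y0. Psi_fun b ta d eta eta1 eta2 y \<le> 1"
    and at_nonpos: "\<forall>y\<ge>y0. ta y \<le> 0"
    and C: "C > 0"
    and abar: "\<forall>y\<ge>y0. ta y / eta y + ((b y)\<^sup>2 - 2 * d y) * eta1 y / (eta y)\<^sup>2 \<le> - C"
    and Psi_mono: "strict_mono_on {y0..} (Psi_fun b ta d eta eta1 eta2)"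
    and eta_inf: "filterlim eta at_top at_top"
    and Psi_lim: "((Psi_fun b ta d eta eta1 eta2) \<longlongrightarrow> 1) at_top"
    and eta1_lim: "((\<lambda>y. eta1 y / eta y) \<longlongrightarrow> 0) at_top"
  shows "((\<lambda>y. u1 y / u y) \<longlongrightarrow> 0) at_top"
  proof -
  have inE: "\<And>y. y \<ge> y0 \<Longrightarrow> y \<in> E"
  proof -
    fix y assume yy: "y \<ge> y0"
    have e1: "Em < ereal y0" using y0 unfolding E_def Espace_def by auto
    have e2: "ereal y0 \<le> ereal y" using yy by simp
    have "Em < ereal y" by (rule order_less_le_trans[OF e1 e2])
    thus "y \<in> E" unfolding E_def Espace_def by auto
  qed
  have atd: "\<And>f f' y. y > y0 \<Longrightarrow> (f has_real_derivative f') (at y within {y0..}) \<Longrightarrow> (f has_real_derivative f') (at y)"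
  proof -
    fix f f' y assume yy: "y > y0" and h: "(f has_real_derivative f') (at y within {y0..})"
    have dd: "(f has_real_derivative f') (at y within {y0<..})" by (rule has_field_derivative_subset[OF h]) auto
    have eq: "at y within {y0<..} = at y" using yy by (intro at_within_open) auto
    show "(f has_real_derivative f') (at y)" using dd unfolding eq .
  qed
  define v where "v = (\<lambda>y. u1 y / u y)"
  define w where "w = (\<lambda>y. eta1 y / eta y)"
  define L where "L = (\<lambda>y. ln (u y) - ln (eta y))"
  define K where "K = (\<lambda>y. d y - (b y)\<^sup>2 / 2)"
  define M where "M = 2 * (R + 1)"
  have M: "M > 2" using R unfolding M_def by auto
  have bnz: "\<And>y. y \<ge> y0 \<Longrightarrow> b y \<noteq> 0" using b_nz inE by auto
  have Kprops: "\<And>y. y \<ge> y0 \<Longrightarrow> K y \<ge> 0 \<and> 4 * K y / (b y)\<^sup>2 \<le> M"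
  proof -
    fix y assume yy: "y \<ge> y0"
    hence yE: "y \<in> E" by (rule inE)
    have "\<bar>rho y\<bar> \<le> 1" using rho_bd yE by auto
    hence rb: "(rho y)\<^sup>2 \<le> 1" by (simp add: abs_square_le_1)
    have r0: "(rho y)\<^sup>2 \<ge> 0" by simp
    define P where "P = (1 - (rho y)\<^sup>2) * R + (rho y)\<^sup>2"
    have Ke: "K y = 1/2 * (b y)\<^sup>2 * P" unfolding K_def d_def d_fun_def P_def by (simp add: algebra_simps)
    have p0: "P \<ge> 0" unfolding P_def using rb r0 R by (intro add_nonneg_nonneg mult_nonneg_nonneg) auto
    have p1: "P \<le> R + 1"
    proof -
      have "(rho y)\<^sup>2 * R \<ge> 0" using R by simp
      moreover have "P = R - (rho y)\<^sup>2 * R + (rho y)\<^sup>2" unfolding P_def by (simp add: algebra_simps)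
      ultimately show ?thesis using rb by linarith
    qed
    have b2: "(b y)\<^sup>2 > 0" using bnz[OF yy] by simp
    have "K y \<ge> 0" unfolding Ke using p0 b2 by simp
    moreover have "4 * K y / (b y)\<^sup>2 = 2 * P" unfolding Ke using b2 by (simp add: field_simps)
    ultimately show "K y \<ge> 0 \<and> 4 * K y / (b y)\<^sup>2 \<le> M" using p1 unfolding M_def by simp
  qed
  have abar': "\<And>y. y \<ge> y0 \<Longrightarrow> ta y / eta y - 2 * K y * w y / eta y \<le> - C"
  proof -
    fix y assume yy: "y \<ge> y0"
    have ep: "eta y > 0" using eta_pos yy by auto
    have "((b y)\<^sup>2 - 2 * d y) * eta1 y / (eta y)\<^sup>2 = - (2 * K y * w y / eta y)"
      unfolding K_def w_def using ep by (simp add: field_simps power2_eq_square)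
    thus "ta y / eta y - 2 * K y * w y / eta y \<le> - C" using abar yy by auto
  qed
  have hu1: "\<And>y. y > y0 \<Longrightarrow> (u has_real_derivative u1 y) (at y)" using u_d1 atd by auto
  have hu2: "\<And>y. y > y0 \<Longrightarrow> (u1 has_real_derivative u2 y) (at y)" using u_d2 atd by auto
  have he1: "\<And>y. y > y0 \<Longrightarrow> (eta has_real_derivative eta1 y) (at y)" using eta_d1 atd by auto
  have hv: "\<And>y. y > y0 \<Longrightarrow> (v has_real_derivative (2/(b y)\<^sup>2 * (K y * (v y)\<^sup>2 - ta y * v y + u y - eta y))) (at y)"
  proof -
    fix y assume yy: "y > y0"
    have up: "u y > 0" using u_pos yy by auto
    have q: "(v has_real_derivative (u2 y * u y - u1 y * u1 y) / (u y ^ Suc (Suc 0))) (at y)"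
      unfolding v_def using DERIV_quotient[OF hu2[OF yy] hu1[OF yy]] up by (simp add: mult.commute)
    have ode: "0 = 1/2 * (b y)\<^sup>2 * u2 y + ta y * u1 y + eta y * u y - (u y)\<^sup>2 - d y * (u1 y)\<^sup>2 / u y"
      using u_ode less_imp_le[OF yy] by blast
    have bz: "b y \<noteq> 0" using bnz less_imp_le[OF yy] by blast
    have "(u2 y * u y - u1 y * u1 y) / (u y ^ Suc (Suc 0)) = 2/(b y)\<^sup>2 * ((d y - (b y)\<^sup>2/2) * (u1 y / u y)\<^sup>2 - ta y * (u1 y / u y) + u y - eta y)"
      by (rule riccati[OF bz up ode])
    hence "(u2 y * u y - u1 y * u1 y) / (u y ^ Suc (Suc 0)) = 2/(b y)\<^sup>2 * (K y * (v y)\<^sup>2 - ta y * v y + u y - eta y)"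
      unfolding K_def v_def .
    with q show "(v has_real_derivative (2/(b y)\<^sup>2 * (K y * (v y)\<^sup>2 - ta y * v y + u y - eta y))) (at y)" by simp
  qed
  have hL: "\<And>y. y > y0 \<Longrightarrow> (L has_real_derivative (v y - w y)) (at y)"
  proof -
    fix y assume yy: "y > y0"
    have up: "u y > 0" and ep: "eta y > 0" using u_pos eta_pos yy by auto
    have "((\<lambda>y. ln (u y) - ln (eta y)) has_real_derivative (1 / u y * u1 y - 1 / eta y * eta1 y)) (at y)"
      by (intro DERIV_diff DERIV_chain2[OF DERIV_ln_divide] hu1 he1 yy up ep)
    thus "(L has_real_derivative (v y - w y)) (at y)" unfolding L_def v_def w_def by simp
  qed
  have Llim: "(L \<longlongrightarrow> 0) at_top"
  proof -
    have "((\<lambda>y. ln (u y / eta y)) \<longlongrightarrow> ln 1) at_top" by (intro tendsto_ln u_lim) simp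
    hence l1: "((\<lambda>y. ln (u y / eta y)) \<longlongrightarrow> 0) at_top" by simp
    have ev: "eventually (\<lambda>y. ln (u y / eta y) = L y) at_top"
      unfolding eventually_at_top_linorder L_def using u_pos eta_pos by (intro exI[of _ y0]) (auto simp: ln_div)
    show ?thesis using tendsto_cong[OF ev, THEN iffD1, OF l1] by simp
  qed
  have wlim: "(w \<longlongrightarrow> 0) at_top" using eta1_lim unfolding w_def .
  have "(v \<longlongrightarrow> 0) at_top"
  proof (rule tendstoI)
    fix eps :: real assume eps: "eps > 0"
    define del where "del = 1 / (16 * M)"
    have del: "del > 0" using M unfolding del_def by simp
    have Ce: "C * eps / 4 > 0" using C eps by simp
    have "eventually (\<lambda>y. y > y0 \<and> \<bar>w y\<bar> < eps/4 \<and> \<bar>u y / eta y - 1\<bar> < C*eps/4 \<and> \<bar>L y\<bar> < del) at_top"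
      using eventually_gt_at_top[of y0] tendstoD[OF wlim, of "eps/4"] tendstoD[OF u_lim Ce] tendstoD[OF Llim del] eps
      by (auto simp: dist_real_def elim: eventually_elim2 eventually_mono intro!: eventually_conj)
    then obtain Y where HY: "\<And>y. y \<ge> Y \<Longrightarrow> y > y0 \<and> \<bar>w y\<bar> < eps/4 \<and> \<bar>u y / eta y - 1\<bar> < C*eps/4 \<and> \<bar>L y\<bar> < del"
      unfolding eventually_at_top_linorder by blast
    show "eventually (\<lambda>y. dist (v y) 0 < eps) at_top"
      unfolding eventually_at_top_linorder
    proof (intro exI[of _ Y] allI impI)
      fix y1 assume y1: "y1 \<ge> Y"
      have H: "\<And>y. y \<ge> y1 \<Longrightarrow> y > y0 \<and> \<bar>w y\<bar> < eps/4 \<and> \<bar>u y / eta y - 1\<bar> < C*eps/4 \<and> \<bar>L y\<bar> < del"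
        using HY y1 by auto
      define v' where "v' = (\<lambda>y. 2/(b y)\<^sup>2 * (K y * (v y)\<^sup>2 - ta y * v y + u y - eta y))"
      have hv': "\<And>y. y \<ge> y1 \<Longrightarrow> (v has_real_derivative v' y) (at y)" unfolding v'_def using hv H by auto
      have loc: "\<And>y. y \<ge> y1 \<Longrightarrow> K y \<ge> 0 \<and> 4 * K y / (b y)\<^sup>2 \<le> M \<and> eta y > 0 \<and> b y \<noteq> 0
            \<and> ta y / eta y - 2 * K y * w y / eta y \<le> - C"
        using H Kprops eta_pos bnz abar' by (meson less_imp_le)
      have notup: "\<not> v y1 \<ge> eps"
      proof
        assume vy1: "v y1 \<ge> eps"
        define T where "T = 1 / eps"
        have T: "T > 0" using eps unfolding T_def by simp
        have d1: "y1 \<le> y1 + T" using T by simp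
        have d2: "\<And>x. y1 \<le> x \<Longrightarrow> x \<le> y1 + T \<Longrightarrow> ((\<lambda>y. v y - eps) has_real_derivative v' x) (at x)"
          using DERIV_diff[OF hv' DERIV_const[of eps]] by simp
        have d3: "0 \<le> v y1 - eps" using vy1 by simp
        have d4: "\<And>x. y1 \<le> x \<Longrightarrow> x \<le> y1 + T \<Longrightarrow> v x - eps = 0 \<Longrightarrow> v' x > 0"
        proof -
          fix x assume x: "y1 \<le> x" "x \<le> y1 + T" "v x - eps = 0"
          have h1: "\<bar>w x\<bar> < eps/4" "\<bar>u x / eta x - 1\<bar> < C*eps/4" using H[OF x(1)] by blast+
          have Hx: "\<bar>w x\<bar> \<le> eps/4" "u x / eta x - 1 > -(C*eps/4)" using h1 abs_less_iff[of "u x / eta x - 1" "C*eps/4"] by linarith+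
          have "K x * (v x)\<^sup>2 - ta x * v x + u x - eta x > 0"
            using up_ineq[of "K x" "eta x" C eps "v x" "w x" "u x" "ta x"] loc[OF x(1)] C eps x(3) Hx by auto
          moreover have "2 / (b x)\<^sup>2 > 0" using loc[OF x(1)] by simp
          ultimately show "v' x > 0" unfolding v'_def by simp
        qed
        have stay: "\<And>x. y1 \<le> x \<Longrightarrow> x \<le> y1 + T \<Longrightarrow> 0 \<le> v x - eps"
          using barrier[OF d1 d2 d3 d4] by blast
        obtain z where z: "y1 < z" "z < y1 + T" "L (y1 + T) - L y1 = (y1 + T - y1) * (v z - w z)"
          using MVT2[of y1 "y1 + T" L "\<lambda>y. v y - w y"] T hL H by force
        have "v z - w z \<ge> 3 * eps / 4" using stay[of z] z H[of z] by auto
        hence "T * (v z - w z) \<ge> T * (3 * eps / 4)" using T by (intro mult_left_mono) auto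
        also have "T * (3 * eps / 4) = 3/4" unfolding T_def using eps by simp
        finally have "L (y1 + T) - L y1 \<ge> 3/4" using z by simp
        moreover have "\<bar>L (y1 + T)\<bar> < del" "\<bar>L y1\<bar> < del" using H T by auto
        moreover have "del < 1/4" using M unfolding del_def by (simp add: field_simps)
        ultimately show False by linarith
      qed
      have notlow: "\<not> v y1 \<le> - eps"
      proof
        assume vy1: "v y1 \<le> - eps"
        define T where "T = 1 / (M * eps)"
        have T: "T > 0" using eps M unfolding T_def by simp
        define D where "D = (\<lambda>y. 1/eps + M * (y - y1))"
        define g where "g = (\<lambda>y. - 1 / D y)"
        have Dr: "\<And>x. y1 \<le> x \<Longrightarrow> x \<le> y1 + T \<Longrightarrow> D x \<ge> 1/eps \<and> D x \<le> 2/eps"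
        proof -
          fix x assume x: "y1 \<le> x" "x \<le> y1 + T"
          have "M * (x - y1) \<ge> 0" using M x by simp
          moreover have "M * (x - y1) \<le> M * T" using M x by (intro mult_left_mono) auto
          moreover have "M * T = 1/eps" unfolding T_def using M eps by simp
          ultimately show "D x \<ge> 1/eps \<and> D x \<le> 2/eps" unfolding D_def by simp
        qed
        have gr: "\<And>x. y1 \<le> x \<Longrightarrow> x \<le> y1 + T \<Longrightarrow> g x \<le> - eps/2"
        proof -
          fix x assume x: "y1 \<le> x" "x \<le> y1 + T"
          have "D x \<le> 2/eps" "D x > 0" using Dr[OF x] eps by (auto intro: less_le_trans[of 0 "1/eps"])
          hence "1 / D x \<ge> 1 / (2/eps)" using eps by (intro divide_left_mono) auto
          thus "g x \<le> - eps/2" unfolding g_def by simp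
        qed
        have d1: "y1 \<le> y1 + T" using T by simp
        have d2: "\<And>x. y1 \<le> x \<Longrightarrow> x \<le> y1 + T \<Longrightarrow> ((\<lambda>y. g y - v y) has_real_derivative (M / (D x)\<^sup>2 - v' x)) (at x)"
        proof -
          fix x assume x: "y1 \<le> x" "x \<le> y1 + T"
          have Dp: "D x \<noteq> 0" using Dr[OF x] eps by (metis divide_pos_pos less_le_trans zero_less_one less_irrefl)
          have "(g has_real_derivative M / (D x)\<^sup>2) (at x)"
            unfolding g_def D_def using Dp unfolding D_def
            by (auto intro!: derivative_eq_intros simp: power2_eq_square)
          thus "((\<lambda>y. g y - v y) has_real_derivative (M / (D x)\<^sup>2 - v' x)) (at x)"
            using hv'[OF x(1)] by (intro DERIV_diff)
        qed
        have d3: "0 \<le> g y1 - v y1" using vy1 eps unfolding g_def D_def by simp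
        have d4: "\<And>x. y1 \<le> x \<Longrightarrow> x \<le> y1 + T \<Longrightarrow> g x - v x = 0 \<Longrightarrow> M / (D x)\<^sup>2 - v' x > 0"
        proof -
          fix x assume x: "y1 \<le> x" "x \<le> y1 + T" "g x - v x = 0"
          have vx: "v x \<le> - eps/2" using gr[OF x(1,2)] x(3) by simp
          have h1: "\<bar>w x\<bar> < eps/4" "\<bar>u x / eta x - 1\<bar> < C*eps/4" using H[OF x(1)] by blast+
          have Hx: "\<bar>w x\<bar> \<le> eps/4" "u x / eta x - 1 < C*eps/4" using h1 abs_less_iff[of "u x / eta x - 1" "C*eps/4"] by linarith+
          have Q: "K x * (v x)\<^sup>2 - ta x * v x + u x - eta x < 2 * K x * (v x)\<^sup>2"
            using low_ineq[of "K x" "eta x" C eps "v x" "w x" "u x" "ta x"] loc[OF x(1)] C eps vx Hx by auto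
          have b2: "2 / (b x)\<^sup>2 > 0" using loc[OF x(1)] by simp
          have "v' x < 2 / (b x)\<^sup>2 * (2 * K x * (v x)\<^sup>2)" unfolding v'_def using mult_strict_left_mono[OF Q b2] .
          also have "\<dots> = (4 * K x / (b x)\<^sup>2) * (v x)\<^sup>2" by simp
          also have "\<dots> \<le> M * (v x)\<^sup>2" using loc[OF x(1)] by (intro mult_right_mono) auto
          also have "M * (v x)\<^sup>2 = M / (D x)\<^sup>2"
          proof -
            have vg: "v x = - (1 / D x)" using x(3) unfolding g_def by simp
            show ?thesis unfolding vg by (simp add: power_divide)
          qed
          finally show "M / (D x)\<^sup>2 - v' x > 0" by simp
        qed
        have stay: "\<And>x. y1 \<le> x \<Longrightarrow> x \<le> y1 + T \<Longrightarrow> 0 \<le> g x - v x"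
          using barrier[OF d1 d2 d3 d4] by blast
        obtain z where z: "y1 < z" "z < y1 + T" "L (y1 + T) - L y1 = (y1 + T - y1) * (v z - w z)"
          using MVT2[of y1 "y1 + T" L "\<lambda>y. v y - w y"] T hL H by force
        have "v z \<le> - eps/2" using stay[of z] gr[of z] z by force
        hence "v z - w z \<le> - eps / 4" using H[of z] z by auto
        hence "T * (v z - w z) \<le> T * (- eps / 4)" using T by (intro mult_left_mono) auto
        also have "T * (- eps / 4) = - 1 / (4 * M)" unfolding T_def using eps M by simp
        finally have "L (y1 + T) - L y1 \<le> - 1 / (4 * M)" using z by simp
        moreover have "\<bar>L (y1 + T)\<bar> < del" "\<bar>L y1\<bar> < del" using H T by auto
        moreover have "2 * del < 1 / (4 * M)" using M unfolding del_def by (simp add: field_simps)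
        ultimately show False by linarith
      qed
      show "dist (v y1) 0 < eps" using notup notlow by auto
    qed
  qed
  thus ?thesis unfolding v_def .
qed

end
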